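(* Let $\mathbf{F}\in[L^2(\mathbb{R}^2)]^2$ have compact support $\Omega$ (a bounded domain), fix $\mathbf{z}\in\mathbb{R}^2\setminus\overline\Omega$, let $\mathcal{T}=\{\tau_1,\tau_2,\tau_3\}$ be three different complex numbers with $\tau_2-\tau_1$, $\tau_3-\tau_1$ linearly independent over $\mathbb{R}$, fix $\hat{\mathbf{x}}_0\in\mathbb{S}$ and choose $\mathbf{q}_0\in\mathbb{S}$ with $\mathbf{q}_0\cdot\hat{\mathbf{x}}_0\neq0$. If the set $$\{\alpha\in\mathbb{R}:\ \Pi_\alpha\subset S_\Omega(\hat{\mathbf{x}}_0),\ f_{\hat{\mathbf{x}}_0}(\alpha)=0\}$$ has Lebesgue measure zero, then the strip $S_\Omega(\hat{\mathbf{x}}_0)$ is uniquely determined by the phaseless data set $$\mathcal{E}_p=\{|u^\infty_{\mathbf{F}\cup\{\mathbf{z}\},p}(\hat{\mathbf{x}}_0,\mathbf{q}_0,\omega,\tau)|:\ \omega\in\mathbb{W},\ \tau\in\mathcal{T}\}.$$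
   Context: $\mathbb{W}=(\omega_{min},\omega_{max})$, $0<\omega_{min}<\omega_{max}$; Lamé constants $\mu>0$, $2\mu+\lambda>0$; $k_p=\omega/\sqrt{\lambda+2\mu}$. $\mathbb{S}$ is the unit circle. The compressional far field of the source is $u^\infty_{\mathbf{F},p}(\hat{\mathbf{x}},\omega)=\int_{\mathbb{R}^2}e^{-ik_p\hat{\mathbf{x}}\cdot\mathbf{y}}\hat{\mathbf{x}}\cdot\mathbf{F}(\mathbf{y})d\mathbf{y}$, and with an added point source at $\mathbf{z}$ with strength $\tau$ and polarization $\mathbf{q}$: $u^\infty_{\mathbf{F}\cup\{\mathbf{z}\},p}(\hat{\mathbf{x}},\mathbf{q},\omega,\tau)=u^\infty_{\mathbf{F},p}(\hat{\mathbf{x}},\omega)+\tau e^{-ik_p\hat{\mathbf{x}}\cdot\mathbf{z}}\,\mathbf{q}\cdot\hat{\mathbf{x}}$. The $\hat{\mathbf{x}}$-strip hull is $S_\Omega(\hat{\mathbf{x}})=\{\mathbf{y}\in\mathbb{R}^2:\ \inf_{\mathbf{w}\in\Omega}\mathbf{w}\cdot\hat{\mathbf{x}}\le\mathbf{y}\cdot\hat{\mathbf{x}}\le\sup_{\mathbf{w}\in\Omega}\mathbf{w}\cdot\hat{\mathbf{x}}\}$. For $\alpha\in\mathbb{R}$, $\Pi_\alpha=\{\mathbf{y}\in\mathbb{R}^2:\ \mathbf{y}\cdot\hat{\mathbf{x}}_0+\alpha=0\}$ and $f_{\hat{\mathbf{x}}_0}(\alpha)=\int_{\Pi_\alpha}\hat{\mathbf{x}}_0\cdot\mathbf{F}(\mathbf{y})\,ds(\mathbf{y})$.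 *)

theory Defs
  imports "HOL-Analysis.Analysis"
begin

definition rcdot :: "real^2 \<Rightarrow> complex^2 \<Rightarrow> complex" where
  "rcdot x v = (\<Sum>i\<in>UNIV. complex_of_real (x $ i) * v $ i)"

definition kp :: "real \<Rightarrow> real \<Rightarrow> real \<Rightarrow> real" where
  "kp lam mu \<omega> = \<omega> / sqrt (lam + 2 * mu)"

definition uinf_p :: "real \<Rightarrow> real \<Rightarrow> (real^2 \<Rightarrow> complex^2) \<Rightarrow> real^2 \<Rightarrow> real \<Rightarrow> complex" where
  "uinf_p lam mu F xh \<omega> =
     (LINT y|lborel. exp (- \<i> * complex_of_real (kp lam mu \<omega> * (xh \<bullet> y))) * rcdot xh (F y))"

text \<open>Far field of F together with a point source at z of strength tau, polarization q.\<close>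
definition uinf_pt :: "real \<Rightarrow> real \<Rightarrow> (real^2 \<Rightarrow> complex^2) \<Rightarrow> real^2 \<Rightarrow> real^2 \<Rightarrow> real^2
    \<Rightarrow> real \<Rightarrow> complex \<Rightarrow> complex" where
  "uinf_pt lam mu F z xh q \<omega> \<tau> =
     uinf_p lam mu F xh \<omega>
     + \<tau> * exp (- \<i> * complex_of_real (kp lam mu \<omega> * (xh \<bullet> z))) * complex_of_real (q \<bullet> xh)"

definition strip_hull :: "(real^2) set \<Rightarrow> real^2 \<Rightarrow> (real^2) set" where
  "strip_hull \<Omega> xh = {y. (INF w\<in>\<Omega>. w \<bullet> xh) \<le> y \<bullet> xh \<and> y \<bullet> xh \<le> (SUP w\<in>\<Omega>. w \<bullet> xh)}"

definition line_Pi :: "real^2 \<Rightarrow> real \<Rightarrow> (real^2) set" where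
  "line_Pi xh \<alpha> = {y. y \<bullet> xh + \<alpha> = 0}"

definition perp2 :: "real^2 \<Rightarrow> real^2" where
  "perp2 x = (\<chi> i. if i = 1 then - (x $ 2) else x $ 1)"

text \<open>f_xh(alpha) = line integral over Pi_alpha of xh . F, arc-length parametrized as
  t |-> -alpha xh + t perp(xh) (xh a unit vector).\<close>
definition f_line :: "(real^2 \<Rightarrow> complex^2) \<Rightarrow> real^2 \<Rightarrow> real \<Rightarrow> complex" where
  "f_line F xh \<alpha> = (LINT t|lborel. rcdot xh (F ((- \<alpha>) *\<^sub>R xh + t *\<^sub>R perp2 xh)))"

definition admissible_source :: "(real^2 \<Rightarrow> complex^2) \<Rightarrow> (real^2) set \<Rightarrow> bool" where
  "admissible_source F \<Omega> \<longleftrightarrow>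
     open \<Omega> \<and> connected \<Omega> \<and> bounded \<Omega> \<and> \<Omega> \<noteq> {} \<and>
     F \<in> borel_measurable lborel \<and>
     (\<forall>i. integrable lborel (\<lambda>y. (cmod (F y $ i))^2)) \<and>
     (\<forall>y. y \<notin> \<Omega> \<longrightarrow> F y = 0)"

end

theory Submission
  imports Defs "HOL-Probability.Probability" "HOL-Complex_Analysis.Cauchy_Integral_Formula"
begin

lemma fourier_unique_real:
  fixes r :: "real \<Rightarrow> real"
  assumes int[measurable]: "integrable lborel r"
  and ft: "\<And>t. (CLINT x|lborel. iexp (t*x) * complex_of_real (r x)) = 0"
  shows "AE x in lborel. r x = 0"
proof -
  define p where "p = (\<lambda>x. max (r x) 0)"
  define n where "n = (\<lambda>x. max (- r x) 0)"
  have rm[measurable]: "r \<in> borel_measurable lborel" using int by auto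
  have ip: "integrable lborel p" unfolding p_def by (intro integrable_max int) simp
  have iN: "integrable lborel n" unfolding n_def by (intro integrable_max integrable_minus int) simp
  have pm[measurable]: "p \<in> borel_measurable lborel" and nm[measurable]: "n \<in> borel_measurable lborel"
    using ip iN by auto
  have rpn: "r x = p x - n x" for x unfolding p_def n_def by auto
  have ie: "integrable lborel (\<lambda>x. iexp (t*x) * complex_of_real (q x))"
    if "integrable lborel q" for q t
  proof -
    have [measurable]: "q \<in> borel_measurable lborel" using that by auto
    show ?thesis by (rule Bochner_Integration.integrable_bound[OF that]) (auto simp: norm_mult)
  qed
  have fteq: "(CLINT x|lborel. iexp (t*x) * complex_of_real (p x)) = (CLINT x|lborel. iexp (t*x) * complex_of_real (n x))" for t
  proof -
    have "(CLINT x|lborel. iexp (t*x) * complex_of_real (p x)) - (CLINT x|lborel. iexp (t*x) * complex_of_real (n x))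
      = (CLINT x|lborel. iexp (t*x) * complex_of_real (p x) - iexp (t*x) * complex_of_real (n x))"
      using ie[OF ip] ie[OF iN] by (simp add: Bochner_Integration.integral_diff)
    also have "\<dots> = (CLINT x|lborel. iexp (t*x) * complex_of_real (r x))"
      by (simp add: rpn algebra_simps)
    finally show ?thesis using ft[of t] by simp
  qed
  define c where "c = integral\<^sup>L lborel p"
  have cn: "c = integral\<^sup>L lborel n" using fteq[of 0] unfolding c_def by simp
  have c0: "c \<ge> 0" unfolding c_def p_def by (intro integral_nonneg_AE) auto
  show ?thesis
  proof (cases "c = 0")
    case True
    have "AE x in lborel. p x = 0"
      using integral_nonneg_eq_0_iff_AE[OF ip] True unfolding c_def p_def by auto
    moreover have "AE x in lborel. n x = 0"
      using integral_nonneg_eq_0_iff_AE[OF iN] True unfolding cn n_def by auto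
    ultimately show ?thesis by eventually_elim (simp add: rpn)
  next
    case False
    with c0 have cpos: "c > 0" by simp
    define M1 where "M1 = density lborel (\<lambda>x. ennreal (p x / c))"
    define M2 where "M2 = density lborel (\<lambda>x. ennreal (n x / c))"
    have rd: "real_distribution (density lborel (\<lambda>x. ennreal (q x / c)))"
      if iq: "integrable lborel q" and q0: "\<And>x. q x \<ge> 0" and qc: "integral\<^sup>L lborel q = c" for q
    proof -
      have [measurable]: "q \<in> borel_measurable lborel" using iq by auto
      have "emeasure (density lborel (\<lambda>x. ennreal (q x / c))) UNIV = (\<integral>\<^sup>+x. ennreal (q x / c) \<partial>lborel)"
        by (simp add: emeasure_density)
      also have "\<dots> = ennreal (integral\<^sup>L lborel (\<lambda>x. q x / c))"
        using cpos q0 by (intro nn_integral_eq_integral) (auto intro!: iq AE_I2 divide_nonneg_pos)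
      also have "\<dots> = 1" using qc cpos by simp
      finally have "prob_space (density lborel (\<lambda>x. ennreal (q x / c)))"
        by (intro prob_spaceI) simp
      then show ?thesis unfolding real_distribution_def real_distribution_axioms_def by simp
    qed
    have chr: "char (density lborel (\<lambda>x. ennreal (q x / c))) t
        = complex_of_real (1/c) * (CLINT x|lborel. iexp (t*x) * complex_of_real (q x))"
      if iq: "integrable lborel q" and q0: "\<And>x. q x \<ge> 0" for q t
    proof -
      have [measurable]: "q \<in> borel_measurable lborel" using iq by auto
      have "char (density lborel (\<lambda>x. ennreal (q x / c))) t
          = (CLINT x|lborel. (q x / c) *\<^sub>R iexp (t*x))"
        unfolding char_def
        by (rule integral_density) (auto simp: q0 cpos less_imp_le)
      also have "\<dots> = (CLINT x|lborel. complex_of_real (1/c) * (iexp (t*x) * complex_of_real (q x)))"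
        by (intro Bochner_Integration.integral_cong) (auto simp: scaleR_conv_of_real)
      finally show ?thesis by simp
    qed
    have "char M1 = char M2"
      unfolding M1_def M2_def
      by (rule ext, subst chr, rule ip, simp add: p_def, subst chr, rule iN, simp add: n_def) (rule arg_cong[where f="\<lambda>z. _ * z"], rule fteq)
    moreover have r1: "real_distribution M1" unfolding M1_def
      by (rule rd[OF ip]) (auto simp: p_def c_def)
    moreover have r2: "real_distribution M2" unfolding M2_def
      by (rule rd[OF iN]) (auto simp: n_def cn)
    ultimately have "M1 = M2" using Levy_uniqueness by blast
    then have "AE x in lborel. ennreal (p x / c) = ennreal (n x / c)"
      unfolding M1_def M2_def
      by (subst (asm) sigma_finite_measure.density_unique_iff[OF sigma_finite_lborel]) auto
    then show ?thesis
    proof eventually_elim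
      case (elim x)
      then have "p x / c = n x / c" using cpos
        by (subst (asm) ennreal_inj) (auto simp: p_def n_def)
      then have "p x = n x" using cpos by simp
      then show ?case unfolding rpn by simp
    qed
  qed
qed

lemma fourier_unique:
  fixes g :: "real \<Rightarrow> complex"
  assumes int[measurable]: "integrable lborel g"
  and ft: "\<And>t. (CLINT x|lborel. iexp (t*x) * g x) = 0"
  shows "AE x in lborel. g x = 0"
proof -
  have gm[measurable]: "g \<in> borel_measurable lborel" using int by auto
  have ie: "integrable lborel (\<lambda>x. iexp (t*x) * q x)"
    if "integrable lborel q" for q :: "real \<Rightarrow> complex" and t
  proof -
    have [measurable]: "q \<in> borel_measurable lborel" using that by auto
    show ?thesis by (rule Bochner_Integration.integrable_bound[OF that]) (auto simp: norm_mult)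
  qed
  have icnj: "integrable lborel (\<lambda>x. cnj (g x))" using int by simp
  have cj: "(CLINT x|lborel. iexp (t*x) * cnj (g x)) = 0" for t
  proof -
    have "(CLINT x|lborel. iexp (t*x) * cnj (g x)) = (CLINT x|lborel. cnj (iexp ((-t)*x) * g x))"
      by (intro Bochner_Integration.integral_cong) (auto simp: exp_cnj)
    also have "\<dots> = 0" using ft[of "-t"] Bochner_Integration.integral_cnj[of lborel "\<lambda>x. iexp ((-t)*x) * g x"] by simp
    finally show ?thesis .
  qed
  have re: "AE x in lborel. Re (g x) = 0"
  proof (rule fourier_unique_real)
    show "integrable lborel (\<lambda>x. Re (g x))" using int by simp
    fix t
    have "(CLINT x|lborel. iexp (t*x) * complex_of_real (Re (g x)))
       = (CLINT x|lborel. (iexp (t*x) * g x + iexp (t*x) * cnj (g x)) / 2)"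
    proof (intro Bochner_Integration.integral_cong refl)
      fix x
      have "complex_of_real (Re (g x)) = (g x + cnj (g x)) / 2" by (simp add: complex_add_cnj)
      then show "iexp (t*x) * complex_of_real (Re (g x)) = (iexp (t*x) * g x + iexp (t*x) * cnj (g x)) / 2"
        by (subst \<open>complex_of_real (Re (g x)) = _\<close>, simp only: distrib_left[symmetric] times_divide_eq_right)
    qed
    also have "\<dots> = ((CLINT x|lborel. iexp (t*x) * g x) + (CLINT x|lborel. iexp (t*x) * cnj (g x))) / 2"
      using ie[OF int, of t] ie[OF icnj, of t] by (simp add: Bochner_Integration.integral_add)
    finally show "(CLINT x|lborel. iexp (t*x) * complex_of_real (Re (g x))) = 0"
      using ft[of t] cj[of t] by simp
  qed
  have im: "AE x in lborel. Im (g x) = 0"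
  proof (rule fourier_unique_real)
    show "integrable lborel (\<lambda>x. Im (g x))" using int by simp
    fix t
    have "(CLINT x|lborel. iexp (t*x) * complex_of_real (Im (g x)))
       = (CLINT x|lborel. (iexp (t*x) * g x - iexp (t*x) * cnj (g x)) / (2 * \<i>))"
    proof (intro Bochner_Integration.integral_cong refl)
      fix x
      have "complex_of_real (Im (g x)) = (g x - cnj (g x)) / (2 * \<i>)" by (simp add: complex_eq_iff)
      then show "iexp (t*x) * complex_of_real (Im (g x)) = (iexp (t*x) * g x - iexp (t*x) * cnj (g x)) / (2 * \<i>)"
        by (subst \<open>complex_of_real (Im (g x)) = _\<close>, simp only: right_diff_distrib[symmetric] times_divide_eq_right)
    qed
    also have "\<dots> = ((CLINT x|lborel. iexp (t*x) * g x) - (CLINT x|lborel. iexp (t*x) * cnj (g x))) / (2 * \<i>)"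
      using ie[OF int, of t] ie[OF icnj, of t] by (simp add: Bochner_Integration.integral_diff)
    finally show "(CLINT x|lborel. iexp (t*x) * complex_of_real (Im (g x))) = 0"
      using ft[of t] cj[of t] by simp
  qed
  from re im show ?thesis by eventually_elim (simp add: complex_eq_iff)
qed

lemma fourier_interval:
  fixes g :: "real \<Rightarrow> complex"
  assumes int[measurable]: "integrable lborel g"
  and R: "0 \<le> R" and supp: "\<And>x. R < \<bar>x\<bar> \<Longrightarrow> g x = 0"
  and ab: "a < b"
  and ft: "\<And>k. a < k \<Longrightarrow> k < b \<Longrightarrow> (CLINT x|lborel. iexp (k*x) * g x) = 0"
  shows "(CLINT x|lborel. iexp (t*x) * g x) = 0"
proof -
  have gm[measurable]: "g \<in> borel_measurable lborel" using int by auto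
  define m where "m = (a+b)/2"
  define s0 where "s0 = complex_of_real m"
  define \<Phi> where "\<Phi> = (\<lambda>s. CLINT x|lborel. exp (\<i> * s * complex_of_real x) * g x)"
  define h where "h = (\<lambda>x. exp (\<i> * s0 * complex_of_real x) * g x)"
  define c where "c = (\<lambda>n. CLINT x|lborel. ((\<i> * complex_of_real x)^n /\<^sub>R fact n) * h x)"
  have hm[measurable]: "h \<in> borel_measurable lborel" unfolding h_def s0_def by measurable
  have nh: "norm (h x) = norm (g x)" for x
  proof -
    have "\<i> * s0 * complex_of_real x = \<i> * complex_of_real (m*x)" unfolding s0_def by simp
    then have "norm (exp (\<i> * s0 * complex_of_real x)) = 1" by (simp only: norm_exp_i_times)
    then show ?thesis unfolding h_def by (simp add: norm_mult)
  qed
  have \<Phi>real: "\<Phi> (complex_of_real k) = (CLINT x|lborel. iexp (k*x) * g x)" for k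
    unfolding \<Phi>_def by (simp add: mult.assoc)
  have sums: "(\<lambda>n. c n * (s - s0)^n) sums \<Phi> s" for s
  proof -
    define w where "w = s - s0"
    define T where "T = (\<lambda>n x. ((\<i> * w * complex_of_real x)^n /\<^sub>R fact n) * h x)"
    have Tm[measurable]: "T n \<in> borel_measurable lborel" for n unfolding T_def by measurable
    have cT: "c n * w^n = integral\<^sup>L lborel (T n)" for n
      unfolding c_def T_def
      by (subst integral_mult_left_zero[symmetric], intro Bochner_Integration.integral_cong)
         (auto simp: power_mult_distrib algebra_simps)
    have Tb: "norm (T n x) \<le> (norm w * R)^n / fact n * norm (g x)" for n x
    proof (cases "R < \<bar>x\<bar>")
      case True then show ?thesis using supp[OF True] by (simp add: T_def h_def)
    next
      case False
      have "norm ((\<i> * w * complex_of_real x)^n) = (norm w * \<bar>x\<bar>)^n"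
        by (simp add: norm_mult norm_power)
      also have "\<dots> \<le> (norm w * R)^n"
        using False by (intro power_mono mult_left_mono) auto
      finally have "norm ((\<i> * w * complex_of_real x)^n) / fact n * norm (g x) \<le> (norm w * R)^n / fact n * norm (g x)"
        by (intro mult_right_mono divide_right_mono) auto
      moreover have "norm (T n x) = norm ((\<i> * w * complex_of_real x)^n) / fact n * norm (g x)"
        unfolding T_def by (simp add: norm_mult nh divide_inverse_commute)
      ultimately show ?thesis by simp
    qed
    define W where "W = (\<lambda>x. exp (norm w * R) * norm (g x))"
    have iW: "integrable lborel W" unfolding W_def using int by simp
    have Sb: "norm (\<Sum>n<N. T n x) \<le> W x" for N x
    proof -
      have "norm (\<Sum>n<N. T n x) \<le> (\<Sum>n<N. (norm w * R)^n / fact n * norm (g x))"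
        by (intro norm_sum[THEN order_trans] sum_mono Tb)
      also have "\<dots> = (\<Sum>n<N. (norm w * R)^n /\<^sub>R fact n) * norm (g x)"
        by (simp add: sum_distrib_right divide_inverse_commute)
      also have "\<dots> \<le> exp (norm w * R) * norm (g x)"
      proof (intro mult_right_mono)
        show "(\<Sum>n<N. (norm w * R)^n /\<^sub>R fact n) \<le> exp (norm w * R)"
          unfolding exp_def
          by (intro sum_le_suminf summable_exp_generic) (auto simp: R)
      qed simp
      finally show ?thesis unfolding W_def .
    qed
    have lim: "(\<lambda>N. \<Sum>n<N. T n x) \<longlonglongrightarrow> exp (\<i> * w * complex_of_real x) * h x" for x
      using sums_mult2[OF exp_converges[of "\<i> * w * complex_of_real x"], of "h x"]
      unfolding sums_def T_def .
    have ef: "(\<lambda>x. exp (\<i> * w * complex_of_real x) * h x) = (\<lambda>x. exp (\<i> * s * complex_of_real x) * g x)"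
    proof
      fix x
      have "exp (\<i> * w * complex_of_real x) * exp (\<i> * s0 * complex_of_real x) = exp (\<i> * s * complex_of_real x)"
        unfolding exp_add[symmetric] w_def by (simp add: algebra_simps)
      then show "exp (\<i> * w * complex_of_real x) * h x = exp (\<i> * s * complex_of_real x) * g x"
        unfolding h_def by (simp add: mult.assoc[symmetric])
    qed
    have "(\<lambda>N. integral\<^sup>L lborel (\<lambda>x. \<Sum>n<N. T n x)) \<longlonglongrightarrow> integral\<^sup>L lborel (\<lambda>x. exp (\<i> * w * complex_of_real x) * h x)"
      by (rule integral_dominated_convergence[where w=W]) (measurable, measurable, rule iW, rule AE_I2, rule lim, rule AE_I2, rule Sb)
    moreover have "integral\<^sup>L lborel (\<lambda>x. \<Sum>n<N. T n x) = (\<Sum>n<N. c n * w^n)" for N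
    proof -
      have "integrable lborel (T n)" for n
      proof (rule Bochner_Integration.integrable_bound[where f="\<lambda>x. (norm w * R)^n / fact n * norm (g x)"])
        show "integrable lborel (\<lambda>x. (norm w * R)^n / fact n * norm (g x))" using int by simp
        show "AE x in lborel. norm (T n x) \<le> norm ((norm w * R)^n / fact n * norm (g x))"
          by (intro AE_I2 order_trans[OF Tb]) (simp only: real_norm_def abs_ge_self)
      qed simp
      then show ?thesis using cT by (simp add: Bochner_Integration.integral_sum)
    qed
    ultimately have "(\<lambda>N. \<Sum>n<N. c n * w^n) \<longlonglongrightarrow> integral\<^sup>L lborel (\<lambda>x. exp (\<i> * w * complex_of_real x) * h x)"
      by simp
    then show ?thesis unfolding sums_def \<Phi>_def ef[symmetric] w_def .
  qed
  have c0: "c 0 = \<Phi> s0"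
    unfolding c_def \<Phi>_def h_def by simp
  have ms: "a < m" "m < b" using ab unfolding m_def by auto
  have \<Phi>s0: "\<Phi> s0 = 0" unfolding s0_def \<Phi>real using ft ms by simp
  have allc: "c n = 0" for n
  proof (rule ccontr)
    assume cn: "c n \<noteq> 0"
    then have "n > 0" using c0 \<Phi>s0 by (cases n) auto
    obtain r where r: "0 < r" and nz: "\<And>z. z \<in> cball s0 r - {s0} \<Longrightarrow> \<Phi> z \<noteq> 0"
    proof (rule powser_0_nonzero[where a=c and \<xi>=s0 and f=\<Phi> and r=1 and m=n])
      show "(\<lambda>i. c i * (x - s0)^i) sums \<Phi> x" if "norm (x - s0) < 1" for x by (rule sums)
      show "\<Phi> s0 = 0" by (rule \<Phi>s0)
      show "c n \<noteq> 0" by (rule cn)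
      show "0 < n" by fact
    qed auto
    define d where "d = min r ((b-a)/2) / 2"
    have d: "0 < d" "d \<le> r" "d < (b-a)/2" using r ab unfolding d_def by (auto simp: min_def)
    have "complex_of_real (m + d) \<in> cball s0 r - {s0}"
      using d unfolding s0_def by (auto simp: dist_norm)
    then have "\<Phi> (complex_of_real (m + d)) \<noteq> 0" by (rule nz)
    moreover have "\<Phi> (complex_of_real (m + d)) = 0"
      unfolding \<Phi>real using d ms m_def by (intro ft) (argo, argo)
    ultimately show False by simp
  qed
  have "\<Phi> (complex_of_real t) = 0"
    using sums[of "complex_of_real t"] allc by (simp add: sums_iff)
  then show ?thesis unfolding \<Phi>real .
qed

definition j2 :: "real \<times> real \<Rightarrow> real^2" where
  "j2 p = (\<chi> i. if i = 1 then fst p else snd p)"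
definition rotP :: "real^2 \<Rightarrow> real^2 \<Rightarrow> real^2" where
  "rotP x v = (-(v$1)) *\<^sub>R x + (v$2) *\<^sub>R perp2 x"
definition rotQ :: "real^2 \<Rightarrow> real^2 \<Rightarrow> real^2" where
  "rotQ x y = (\<chi> i. if i = 1 then -(y \<bullet> x) else y \<bullet> perp2 x)"

lemma perp2_nth[simp]: "perp2 x $ 1 = - (x $ 2)" "perp2 x $ 2 = x $ 1"
  by (simp_all add: perp2_def)

lemma inner2: "(x::real^2) \<bullet> y = x$1 * y$1 + x$2 * y$2"
  by (simp add: inner_vec_def sum_2)

lemma unit2: "norm (x::real^2) = 1 \<Longrightarrow> x$1 * x$1 + x$2 * x$2 = 1"
  by (metis inner2 norm_eq_1)

lemma j2_nth[simp]: "j2 p $ 1 = fst p" "j2 p $ 2 = snd p"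
  by (simp_all add: j2_def)

lemma rotQ_nth[simp]: "rotQ x y $ 1 = -(y \<bullet> x)" "rotQ x y $ 2 = y \<bullet> perp2 x"
  by (simp_all add: rotQ_def)

lemma rotP_nth[simp]: "rotP x v $ 1 = -(v$1) * x$1 - v$2 * x$2" "rotP x v $ 2 = -(v$1) * x$2 + v$2 * x$1"
  by (simp_all add: rotP_def)

lemma rotQP: "norm x = 1 \<Longrightarrow> rotQ x (rotP x v) = v"
  using unit2[of x] unfolding vec_eq_iff forall_2 by (simp add: inner2) (intro conjI; algebra)

lemma rotPQ: "norm x = 1 \<Longrightarrow> rotP x (rotQ x y) = y"
  using unit2[of x] unfolding vec_eq_iff forall_2 by (simp add: inner2) (intro conjI; algebra)

lemma rotQ_orth: assumes "norm x = 1" shows "orthogonal_transformation (rotQ x)"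
  unfolding orthogonal_transformation_def
proof (intro conjI allI)
  show "linear (rotQ x)"
    by (intro linearI) (simp_all add: vec_eq_iff forall_2 inner_add_left inner_scaleR_left)
  fix v w
  show "rotQ x v \<bullet> rotQ x w = v \<bullet> w"
    using unit2[OF assms] by (simp add: inner2) algebra
qed

lemma j2_measurable[measurable]: "j2 \<in> borel_measurable borel"
proof (rule borel_measurable_continuous_onI)
  show "continuous_on UNIV j2"
    unfolding j2_def
  proof (intro continuous_on_vec_lambda)
    fix i :: 2
    show "continuous_on UNIV (\<lambda>x. if i = 1 then fst x else snd x :: real)"
      by (cases "i = 1") (auto intro!: continuous_intros)
  qed
qed

lemma rotP_measurable[measurable]: "rotP x \<in> borel_measurable borel"
proof (rule borel_measurable_continuous_onI)
  show "continuous_on UNIV (rotP x)"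
    unfolding rotP_def by (auto intro!: continuous_intros)
qed

lemma prod_Basis_vec2: "(\<Prod>b\<in>(Basis::(real^2) set). f b) = f (axis 1 1) * f (axis 2 1)"
proof -
  have B: "(Basis::(real^2) set) = {axis 1 1, axis 2 1}"
    by (auto simp: Basis_vec_def UNIV_2)
  have "axis 1 (1::real) \<noteq> (axis 2 1 :: real^2)" by (simp add: axis_eq_axis)
  then show ?thesis unfolding B by simp
qed

lemma distr_j2: "distr (lborel :: (real \<times> real) measure) borel j2 = lborel"
proof (rule lborel_eqI[symmetric])
  fix l u :: "real^2"
  assume le: "\<And>b. b \<in> Basis \<Longrightarrow> l \<bullet> b \<le> u \<bullet> b"
  have le1: "l$1 \<le> u$1" and le2: "l$2 \<le> u$2"
    using le[of "axis 1 1"] le[of "axis 2 1"] by (auto simp: Basis_vec_def inner_axis)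
  have pre: "j2 -` box l u = {l$1<..<u$1} \<times> {l$2<..<u$2}"
    by (auto simp: mem_box_cart forall_2)
  have "emeasure (distr lborel borel j2) (box l u) = emeasure (lborel :: (real \<times> real) measure) ({l$1<..<u$1} \<times> {l$2<..<u$2})"
    by (subst emeasure_distr) (auto simp: pre)
  also have "\<dots> = emeasure (lborel \<Otimes>\<^sub>M lborel) ({l$1<..<u$1} \<times> {l$2<..<u$2})"
    by (simp only: lborel_prod)
  also have "\<dots> = ennreal (u$1 - l$1) * ennreal (u$2 - l$2)"
    by (simp add: lborel.emeasure_pair_measure_Times le1 le2)
  also have "\<dots> = ennreal (\<Prod>b\<in>Basis. (u - l) \<bullet> b)"
    by (simp add: prod_Basis_vec2 inner_axis ennreal_mult le1 le2)
  finally show "emeasure (distr lborel borel j2) (box l u) = (\<Prod>b\<in>Basis. (u - l) \<bullet> b)" .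
qed simp

lemma rotP_vimage: assumes "norm x = 1" shows "rotP x -` S = rotQ x ` S"
proof
  show "rotP x -` S \<subseteq> rotQ x ` S"
    using rotQP[OF assms] by (auto intro!: image_eqI[where x="rotP x _"])
  show "rotQ x ` S \<subseteq> rotP x -` S"
    using rotPQ[OF assms] by auto
qed

lemma distr_rotP: assumes x: "norm x = 1" shows "distr lborel borel (rotP x) = lborel"
proof (rule lborel_eqI[symmetric])
  fix l u :: "real^2"
  assume le: "\<And>b. b \<in> Basis \<Longrightarrow> l \<bullet> b \<le> u \<bullet> b"
  have bm: "rotP x -` box l u \<in> sets lborel"
    using measurable_sets_borel[OF rotP_measurable[of x], of "box l u"] by simp
  have bd: "bounded (rotP x -` box l u)"
    unfolding rotP_vimage[OF x]
    by (intro bounded_linear_image bounded_box orthogonal_transformation_linear[THEN linear_conv_bounded_linear[THEN iffD1]] rotQ_orth x)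
  have fm: "rotP x -` box l u \<in> fmeasurable lborel"
    using bm emeasure_bounded_finite[OF bd] by (intro fmeasurableI) auto
  have fm2: "box l u \<in> fmeasurable lborel"
    using emeasure_lborel_box_finite[of l u] by (intro fmeasurableI) auto
  have "emeasure (distr lborel borel (rotP x)) (box l u) = emeasure lborel (rotP x -` box l u)"
    by (subst emeasure_distr) auto
  also have "\<dots> = ennreal (measure lborel (rotP x -` box l u))"
    using fm by (rule emeasure_eq_measure2)
  also have "measure lborel (rotP x -` box l u) = measure lebesgue (rotQ x ` box l u)"
    using bm by (simp add: rotP_vimage[OF x])
  also have "\<dots> = measure lebesgue (box l u)"
    by (rule measure_orthogonal_image[OF rotQ_orth[OF x]]) simp
  also have "\<dots> = measure lborel (box l u)" by simp
  also have "ennreal \<dots> = emeasure lborel (box l u)"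
    using fm2 by (rule emeasure_eq_measure2[symmetric])
  also have "\<dots> = (\<Prod>b\<in>Basis. (u - l) \<bullet> b)"
    using le by (simp add: emeasure_lborel_box_eq)
  finally show "emeasure (distr lborel borel (rotP x)) (box l u) = (\<Prod>b\<in>Basis. (u - l) \<bullet> b)" .
qed simp

definition Gmap :: "real^2 \<Rightarrow> real \<times> real \<Rightarrow> real^2" where
  "Gmap x p = (- fst p) *\<^sub>R x + snd p *\<^sub>R perp2 x"

lemma Gmap_eq: "Gmap x = rotP x \<circ> j2"
  by (auto simp: Gmap_def rotP_def)

lemma Gmap_measurable[measurable]: "Gmap x \<in> borel_measurable borel"
  unfolding Gmap_eq by measurable

lemma distr_Gmap: assumes x: "norm x = 1" shows "distr (lborel :: (real \<times> real) measure) borel (Gmap x) = lborel"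
proof -
  have "distr (lborel :: (real \<times> real) measure) borel (Gmap x) = distr (distr lborel borel j2) borel (rotP x)"
    unfolding Gmap_eq by (subst distr_distr) auto
  also have "\<dots> = lborel" by (simp add: distr_j2 distr_rotP[OF x])
  finally show ?thesis .
qed

lemma Gmap_inner: "norm x = 1 \<Longrightarrow> Gmap x p \<bullet> x = - fst p"
  using unit2[of x] by (simp add: Gmap_def inner2) algebra

lemma rot_integral:
  fixes \<phi> :: "real^2 \<Rightarrow> complex"
  assumes x: "norm x = 1" and int: "integrable lborel \<phi>"
  shows "integrable (lborel \<Otimes>\<^sub>M lborel) (\<lambda>p. \<phi> (Gmap x p))"
    and "integral\<^sup>L lborel \<phi> = (\<integral>a. (\<integral>t. \<phi> (Gmap x (a, t)) \<partial>lborel) \<partial>lborel)"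
proof -
  have [measurable]: "\<phi> \<in> borel_measurable borel" using int by auto
  have "integrable (distr (lborel :: (real \<times> real) measure) borel (Gmap x)) \<phi>"
    using int by (simp add: distr_Gmap[OF x])
  then have i1: "integrable (lborel :: (real \<times> real) measure) (\<lambda>p. \<phi> (Gmap x p))"
    by (subst (asm) integrable_distr_eq) auto
  then show i2: "integrable (lborel \<Otimes>\<^sub>M lborel) (\<lambda>p. \<phi> (Gmap x p))"
    by (simp add: lborel_prod)
  have "integral\<^sup>L lborel \<phi> = integral\<^sup>L (distr (lborel :: (real \<times> real) measure) borel (Gmap x)) \<phi>"
    by (simp add: distr_Gmap[OF x])
  also have "\<dots> = integral\<^sup>L (lborel :: (real \<times> real) measure) (\<lambda>p. \<phi> (Gmap x p))"
    by (subst integral_distr) auto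
  also have "\<dots> = integral\<^sup>L (lborel \<Otimes>\<^sub>M lborel) (\<lambda>p. \<phi> (Gmap x p))"
    by (simp add: lborel_prod)
  also have "\<dots> = (\<integral>a. (\<integral>t. \<phi> (Gmap x (a, t)) \<partial>lborel) \<partial>lborel)"
    using lborel_pair.integral_fst'[OF i2] by simp
  finally show "integral\<^sup>L lborel \<phi> = (\<integral>a. (\<integral>t. \<phi> (Gmap x (a, t)) \<partial>lborel) \<partial>lborel)" .
qed

lemma cmod_add_sq: "cmod (a + b)^2 = cmod a^2 + 2 * Re (a * cnj b) + cmod b^2"
  by (simp only: cmod_power2) (simp add: power2_eq_square algebra_simps)

lemma phase_retrieval:
  fixes A1 A2 B t1 t2 t3 :: complex
  assumes B: "B \<noteq> 0" and d12: "t1 \<noteq> t2"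
    and li: "\<forall>r s :: real. complex_of_real r * (t2 - t1) + complex_of_real s * (t3 - t1) = 0 \<longrightarrow> r = 0 \<and> s = 0"
    and e1: "cmod (A1 + t1 * B) = cmod (A2 + t1 * B)"
    and e2: "cmod (A1 + t2 * B) = cmod (A2 + t2 * B)"
    and e3: "cmod (A1 + t3 * B) = cmod (A2 + t3 * B)"
  shows "A1 = A2"
proof -
  define w where "w = (A1 - A2) * cnj B"
  define K where "K = cmod A1^2 - cmod A2^2"
  have key: "K + 2 * Re (w * cnj t) = 0" if "cmod (A1 + t * B) = cmod (A2 + t * B)" for t
  proof -
    have "cmod (A1 + t * B)^2 = cmod (A2 + t * B)^2" using that by simp
    then have "cmod A1^2 + 2 * Re (A1 * cnj (t*B)) = cmod A2^2 + 2 * Re (A2 * cnj (t*B))"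
      unfolding cmod_add_sq by simp
    moreover have "Re (A1 * cnj (t*B)) - Re (A2 * cnj (t*B)) = Re (w * cnj t)"
      unfolding w_def by (simp add: algebra_simps)
    ultimately show ?thesis unfolding K_def by simp
  qed
  note k1 = key[OF e1] and k2 = key[OF e2] and k3 = key[OF e3]
  define s2 where "s2 = t2 - t1"
  define s3 where "s3 = t3 - t1"
  have r2: "Re (w * cnj s2) = 0" using k1 k2 unfolding s2_def by (simp add: algebra_simps)
  have r3: "Re (w * cnj s3) = 0" using k1 k3 unfolding s3_def by (simp add: algebra_simps)
  have im: "cnj w * s = - \<i> * complex_of_real (Im (w * cnj s))" if "Re (w * cnj s) = 0" for s
  proof -
    have "w * cnj s = \<i> * complex_of_real (Im (w * cnj s))" using that by (simp add: complex_eq_iff)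
    then have "cnj (w * cnj s) = cnj (\<i> * complex_of_real (Im (w * cnj s)))" by simp
    then show ?thesis by simp
  qed
  show ?thesis
  proof (rule ccontr)
    assume "A1 \<noteq> A2"
    then have w0: "cnj w \<noteq> 0" using B unfolding w_def by simp
    define a2 where "a2 = Im (w * cnj s2)"
    define a3 where "a3 = Im (w * cnj s3)"
    have I2: "cnj w * s2 = - \<i> * complex_of_real a2" using im[OF r2] unfolding a2_def .
    have I3: "cnj w * s3 = - \<i> * complex_of_real a3" using im[OF r3] unfolding a3_def .
    have "cnj w * (complex_of_real a3 * s2 + complex_of_real (- a2) * s3)
        = complex_of_real a3 * (cnj w * s2) - complex_of_real a2 * (cnj w * s3)"
      by (simp add: algebra_simps)
    also have "\<dots> = complex_of_real a3 * (- \<i> * complex_of_real a2) - complex_of_real a2 * (- \<i> * complex_of_real a3)"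
      unfolding I2 I3 ..
    also have "\<dots> = 0" by (simp add: algebra_simps)
    finally have "cnj w * (complex_of_real a3 * s2 + complex_of_real (- a2) * s3) = 0" .
    then have "complex_of_real a3 * s2 + complex_of_real (- a2) * s3 = 0" using w0 by simp
    then have "a3 = 0 \<and> - a2 = 0"
      using li unfolding s2_def s3_def by blast
    then have "a2 = 0" by simp
    then have "cnj w * s2 = 0" using I2 by simp
    then have "s2 = 0" using w0 by simp
    then show False using d12 unfolding s2_def by simp
  qed
qed

lemma adm_zero: "admissible_source F \<Omega> \<Longrightarrow> y \<notin> \<Omega> \<Longrightarrow> F y = 0"
  unfolding admissible_source_def by blast

lemma rcdot_zero[simp]: "rcdot x 0 = 0"
  by (simp add: rcdot_def)

lemma adm_integrable:
  assumes adm: "admissible_source F \<Omega>"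
  shows "integrable lborel (\<lambda>y. rcdot x (F y))"
proof -
  have Fm[measurable]: "F \<in> borel_measurable lborel" and sq: "\<And>i. integrable lborel (\<lambda>y. (cmod (F y $ i))^2)"
    and bd: "bounded \<Omega>" and op: "open \<Omega>"
    using adm unfolding admissible_source_def by auto
  have comp: "integrable lborel (\<lambda>y. F y $ i)" for i
  proof (rule Bochner_Integration.integrable_bound[where f="\<lambda>y. indicator \<Omega> y + (cmod (F y $ i))^2"])
    show "integrable lborel (\<lambda>y. indicator \<Omega> y + (cmod (F y $ i))^2 :: real)"
      using op emeasure_bounded_finite[OF bd] by (intro Bochner_Integration.integrable_add sq integrable_real_indicator) auto
    have "(\<lambda>v::complex^2. v $ i) \<in> borel_measurable borel"
      by (intro borel_measurable_continuous_onI continuous_on_component continuous_on_id)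
    then show "(\<lambda>y. F y $ i) \<in> borel_measurable lborel"
      using measurable_compose[OF Fm] by (simp add: comp_def)
    show "AE y in lborel. norm (F y $ i) \<le> norm (indicator \<Omega> y + (cmod (F y $ i))^2 :: real)"
    proof (intro AE_I2)
      fix y
      show "norm (F y $ i) \<le> norm (indicator \<Omega> y + (cmod (F y $ i))^2 :: real)"
      proof (cases "y \<in> \<Omega>")
        case False then show ?thesis using adm_zero[OF adm False] by simp
      next
        case True
        define z where "z = cmod (F y $ i)"
        have "z \<le> 1 + z^2"
        proof (cases "z \<le> 1")
          case True then show ?thesis using zero_le_power2[of z] by linarith
        next
          case False
          then have "z * 1 \<le> z * z" by (intro mult_left_mono) auto
          then show ?thesis by (simp add: power2_eq_square)
        qed
        then have "cmod (F y $ i) \<le> 1 + (cmod (F y $ i))^2" unfolding z_def .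
        then show ?thesis using True by simp
      qed
    qed
  qed
  show ?thesis unfolding rcdot_def
    by (intro Bochner_Integration.integrable_sum integrable_mult_right comp)
qed

lemma Gmap_pair: "Gmap x (a, t) = (- a) *\<^sub>R x + t *\<^sub>R perp2 x"
  by (simp add: Gmap_def)

lemma f_line_Gmap: "f_line F x a = (CLINT t|lborel. rcdot x (F (Gmap x (a, t))))"
  by (simp add: f_line_def Gmap_pair)

lemma f_line_integrable:
  assumes adm: "admissible_source F \<Omega>" and x: "norm x = 1"
  shows "integrable lborel (f_line F x)"
proof -
  have "integrable (lborel \<Otimes>\<^sub>M lborel) (\<lambda>p. rcdot x (F (Gmap x p)))"
    by (rule rot_integral(1)[OF x adm_integrable[OF adm]])
  from lborel_pair.integrable_fst'[OF this] show ?thesis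
    unfolding f_line_Gmap[abs_def] by simp
qed

lemma uinf_p_eq:
  assumes adm: "admissible_source F \<Omega>" and x: "norm x = 1"
  shows "uinf_p lam mu F x \<omega> = (CLINT a|lborel. iexp (kp lam mu \<omega> * a) * f_line F x a)"
proof -
  define k where "k = kp lam mu \<omega>"
  define \<phi> where "\<phi> = (\<lambda>y. exp (- \<i> * complex_of_real (k * (x \<bullet> y))) * rcdot x (F y))"
  have ir: "integrable lborel (\<lambda>y. rcdot x (F y))" by (rule adm_integrable[OF adm])
  have "(\<lambda>y. exp (- \<i> * complex_of_real (k * (x \<bullet> y)))) \<in> borel_measurable borel"
    by (intro borel_measurable_continuous_onI) (auto intro!: continuous_intros)
  then have em: "(\<lambda>y. exp (- \<i> * complex_of_real (k * (x \<bullet> y)))) \<in> borel_measurable lborel"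
    by simp
  have rm: "(\<lambda>y. rcdot x (F y)) \<in> borel_measurable lborel" using ir by auto
  have i\<phi>: "integrable lborel \<phi>"
    unfolding \<phi>_def
  proof (rule Bochner_Integration.integrable_bound[OF ir])
    show "(\<lambda>y. exp (- \<i> * complex_of_real (k * (x \<bullet> y))) * rcdot x (F y)) \<in> borel_measurable lborel"
      using em rm by (rule borel_measurable_times)
    have "norm (exp (- \<i> * complex_of_real (k * (x \<bullet> y)))) = 1" for y
      using norm_exp_i_times[of "- (k * (x \<bullet> y))"] by simp
    then show "AE y in lborel. norm (exp (- \<i> * complex_of_real (k * (x \<bullet> y))) * rcdot x (F y)) \<le> norm (rcdot x (F y))"
      by (simp add: norm_mult)
  qed
  have "uinf_p lam mu F x \<omega> = integral\<^sup>L lborel \<phi>"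
    unfolding uinf_p_def \<phi>_def k_def ..
  also have "\<dots> = (\<integral>a. (\<integral>t. \<phi> (Gmap x (a, t)) \<partial>lborel) \<partial>lborel)"
    by (rule rot_integral(2)[OF x i\<phi>])
  also have "\<dots> = (CLINT a|lborel. iexp (k * a) * f_line F x a)"
  proof (intro Bochner_Integration.integral_cong refl)
    fix a
    have "\<phi> (Gmap x (a, t)) = iexp (k * a) * rcdot x (F (Gmap x (a, t)))" for t
    proof -
      have "x \<bullet> Gmap x (a, t) = - a" using Gmap_inner[OF x, of "(a,t)"] by (simp add: inner_commute)
      then show ?thesis unfolding \<phi>_def by simp
    qed
    then show "(\<integral>t. \<phi> (Gmap x (a, t)) \<partial>lborel) = iexp (k * a) * f_line F x a"
      unfolding f_line_Gmap by simp
  qed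
  finally show ?thesis unfolding k_def .
qed

definition sA :: "(real^2) set \<Rightarrow> real^2 \<Rightarrow> real" where "sA \<Omega> x = (INF w\<in>\<Omega>. w \<bullet> x)"
definition sB :: "(real^2) set \<Rightarrow> real^2 \<Rightarrow> real" where "sB \<Omega> x = (SUP w\<in>\<Omega>. w \<bullet> x)"

lemma strip_hull_sAB: "strip_hull \<Omega> x = {y. sA \<Omega> x \<le> y \<bullet> x \<and> y \<bullet> x \<le> sB \<Omega> x}"
  by (simp add: strip_hull_def sA_def sB_def)

lemma adm_bound:
  assumes adm: "admissible_source F \<Omega>" and x: "norm x = 1"
  obtains R where "R \<ge> 0" "\<And>w. w \<in> \<Omega> \<Longrightarrow> \<bar>w \<bullet> x\<bar> \<le> R"
proof -
  have "bounded \<Omega>" using adm unfolding admissible_source_def by auto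
  then obtain R where R: "\<And>w. w \<in> \<Omega> \<Longrightarrow> norm w \<le> R" unfolding bounded_iff by auto
  have "\<bar>w \<bullet> x\<bar> \<le> max R 0" if "w \<in> \<Omega>" for w
    using Cauchy_Schwarz_ineq2[of w x] R[OF that] x by simp
  then show ?thesis using that[of "max R 0"] by simp
qed

lemma adm_sAB:
  assumes adm: "admissible_source F \<Omega>" and x: "norm x = 1"
  shows "\<And>w. w \<in> \<Omega> \<Longrightarrow> sA \<Omega> x \<le> w \<bullet> x \<and> w \<bullet> x \<le> sB \<Omega> x"
    and "sA \<Omega> x < sB \<Omega> x"
    and "\<And>R. (\<And>w. w \<in> \<Omega> \<Longrightarrow> \<bar>w \<bullet> x\<bar> \<le> R) \<Longrightarrow> - R \<le> sA \<Omega> x \<and> sB \<Omega> x \<le> R"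
proof -
  obtain R0 where R0: "\<And>w. w \<in> \<Omega> \<Longrightarrow> \<bar>w \<bullet> x\<bar> \<le> R0" using adm_bound[OF adm x] by blast
  have ne: "\<Omega> \<noteq> {}" and op: "open \<Omega>" using adm unfolding admissible_source_def by auto
  have bb: "bdd_below ((\<lambda>w. w \<bullet> x) ` \<Omega>)"
    using R0 by (intro bdd_belowI[where m="- R0"]) (force simp: abs_le_iff)
  have ba: "bdd_above ((\<lambda>w. w \<bullet> x) ` \<Omega>)"
    using R0 by (intro bdd_aboveI[where M="R0"]) (force simp: abs_le_iff)
  show mem: "sA \<Omega> x \<le> w \<bullet> x \<and> w \<bullet> x \<le> sB \<Omega> x" if "w \<in> \<Omega>" for w
    unfolding sA_def sB_def using that bb ba by (auto intro: cINF_lower cSUP_upper)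
  show "- R \<le> sA \<Omega> x \<and> sB \<Omega> x \<le> R" if "\<And>w. w \<in> \<Omega> \<Longrightarrow> \<bar>w \<bullet> x\<bar> \<le> R" for R
  proof -
    have h: "- R \<le> w \<bullet> x" "w \<bullet> x \<le> R" if "w \<in> \<Omega>" for w
      using \<open>\<And>w. w \<in> \<Omega> \<Longrightarrow> \<bar>w \<bullet> x\<bar> \<le> R\<close>[OF that] by (simp_all add: abs_le_iff)
    have "- R \<le> (INF w\<in>\<Omega>. w \<bullet> x)" by (rule cINF_greatest[OF ne h(1)])
    moreover have "(SUP w\<in>\<Omega>. w \<bullet> x) \<le> R" by (rule cSUP_least[OF ne h(2)])
    ultimately show ?thesis unfolding sA_def sB_def by simp
  qed
  from ne obtain w where w: "w \<in> \<Omega>" by auto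
  from op w obtain e where e: "e > 0" "ball w e \<subseteq> \<Omega>" using open_contains_ball by blast
  have "w + (e/2) *\<^sub>R x \<in> \<Omega>" "w - (e/2) *\<^sub>R x \<in> \<Omega>"
    using e x by (auto intro!: subsetD[OF e(2)] simp: dist_norm)
  from mem[OF this(1)] mem[OF this(2)] have "sA \<Omega> x \<le> w \<bullet> x - e/2" "w \<bullet> x + e/2 \<le> sB \<Omega> x"
    using x by (auto simp: inner_add_left inner_diff_left norm_eq_1)
  then show "sA \<Omega> x < sB \<Omega> x" using e by linarith
qed

lemma line_sub_strip:
  assumes x: "norm x = 1"
  shows "line_Pi x \<alpha> \<subseteq> strip_hull \<Omega> x \<longleftrightarrow> sA \<Omega> x \<le> - \<alpha> \<and> - \<alpha> \<le> sB \<Omega> x"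
proof
  assume "line_Pi x \<alpha> \<subseteq> strip_hull \<Omega> x"
  moreover have "(- \<alpha>) *\<^sub>R x \<in> line_Pi x \<alpha>" using x by (simp add: line_Pi_def norm_eq_1)
  ultimately show "sA \<Omega> x \<le> - \<alpha> \<and> - \<alpha> \<le> sB \<Omega> x"
    using x by (auto simp: strip_hull_sAB norm_eq_1)
next
  assume "sA \<Omega> x \<le> - \<alpha> \<and> - \<alpha> \<le> sB \<Omega> x"
  then show "line_Pi x \<alpha> \<subseteq> strip_hull \<Omega> x"
    by (auto simp: strip_hull_sAB line_Pi_def)
qed

lemma f_line_outside:
  assumes adm: "admissible_source F \<Omega>" and x: "norm x = 1"
    and out: "- \<alpha> < sA \<Omega> x \<or> sB \<Omega> x < - \<alpha>"
  shows "f_line F x \<alpha> = 0"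
proof -
  have "F (Gmap x (\<alpha>, t)) = 0" for t
  proof (rule adm_zero[OF adm])
    show "Gmap x (\<alpha>, t) \<notin> \<Omega>"
      using adm_sAB(1)[OF adm x, of "Gmap x (\<alpha>, t)"] Gmap_inner[OF x, of "(\<alpha>, t)"] out by auto
  qed
  then show ?thesis unfolding f_line_Gmap by simp
qed

lemma interval_contra:
  fixes f1 f2 :: "real \<Rightarrow> complex"
  assumes x: "norm x = 1" and cd: "c < d"
    and inside: "\<And>\<alpha>. c < - \<alpha> \<Longrightarrow> - \<alpha> < d \<Longrightarrow> (sA \<Omega>1 x \<le> - \<alpha> \<and> - \<alpha> \<le> sB \<Omega>1 x) \<and> f2 \<alpha> = 0"
    and ae: "AE \<alpha> in lborel. f1 \<alpha> = f2 \<alpha>"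
    and Z: "{\<alpha>. line_Pi x \<alpha> \<subseteq> strip_hull \<Omega>1 x \<and> f1 \<alpha> = 0} \<in> null_sets lebesgue"
  shows False
proof -
  from ae obtain N where N0: "{\<alpha> \<in> space lborel. \<not> (f1 \<alpha> = f2 \<alpha>)} \<subseteq> N" "emeasure lborel N = 0" "N \<in> sets lborel"
    by (rule AE_E)
  have N: "{\<alpha>. f1 \<alpha> \<noteq> f2 \<alpha>} \<subseteq> N" "N \<in> null_sets lborel"
    using N0 by (auto simp: null_sets_def)
  have NL: "N \<in> null_sets lebesgue" using N(2) by (rule null_sets_completionI)
  have sub: "{-d<..<-c} \<subseteq> {\<alpha>. line_Pi x \<alpha> \<subseteq> strip_hull \<Omega>1 x \<and> f1 \<alpha> = 0} \<union> N"
  proof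
    fix \<alpha> assume "\<alpha> \<in> {-d<..<-c}"
    then have "c < - \<alpha>" "- \<alpha> < d" by auto
    from inside[OF this] have "line_Pi x \<alpha> \<subseteq> strip_hull \<Omega>1 x" and f2: "f2 \<alpha> = 0"
      using line_sub_strip[OF x] by auto
    moreover have "\<alpha> \<in> N \<or> f1 \<alpha> = f2 \<alpha>" using N(1) by blast
    ultimately show "\<alpha> \<in> {\<alpha>. line_Pi x \<alpha> \<subseteq> strip_hull \<Omega>1 x \<and> f1 \<alpha> = 0} \<union> N"
      by auto
  qed
  have "{-d<..<-c} \<in> null_sets lebesgue"
    by (rule null_sets_subset[OF null_sets.Un[OF Z NL] _ sub]) simp
  then have "{-d<..<-c} \<in> null_sets lborel"
    by (subst (asm) null_sets_completion_iff) auto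
  then have "emeasure lborel {-d<..<-c} = 0" by auto
  then show False using cd by simp
qed

theorem theorem3p5:
  fixes \<omega>min \<omega>max lam mu :: real
    and F1 F2 :: "real^2 \<Rightarrow> complex^2"
    and \<Omega>1 \<Omega>2 :: "(real^2) set"
    and z x0 q0 :: "real^2"
    and \<tau>1 \<tau>2 \<tau>3 :: complex
  assumes "0 < \<omega>min" and "\<omega>min < \<omega>max"
    and "mu > 0" and "2 * mu + lam > 0"
    and "admissible_source F1 \<Omega>1" and "admissible_source F2 \<Omega>2"
    and "z \<notin> closure \<Omega>1" and "z \<notin> closure \<Omega>2"
    and "\<tau>1 \<noteq> \<tau>2" and "\<tau>1 \<noteq> \<tau>3" and "\<tau>2 \<noteq> \<tau>3"
    and "\<forall>r s :: real. complex_of_real r * (\<tau>2 - \<tau>1) + complex_of_real s * (\<tau>3 - \<tau>1) = 0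
           \<longrightarrow> r = 0 \<and> s = 0"
    and "norm x0 = 1" and "norm q0 = 1" and "q0 \<bullet> x0 \<noteq> 0"
    and "{\<alpha>. line_Pi x0 \<alpha> \<subseteq> strip_hull \<Omega>1 x0 \<and> f_line F1 x0 \<alpha> = 0} \<in> null_sets lebesgue"
    and "{\<alpha>. line_Pi x0 \<alpha> \<subseteq> strip_hull \<Omega>2 x0 \<and> f_line F2 x0 \<alpha> = 0} \<in> null_sets lebesgue"
    and "\<forall>\<omega>\<in>{\<omega>min<..<\<omega>max}. \<forall>\<tau>\<in>{\<tau>1, \<tau>2, \<tau>3}.
           cmod (uinf_pt lam mu F1 z x0 q0 \<omega> \<tau>) = cmod (uinf_pt lam mu F2 z x0 q0 \<omega> \<tau>)"
  shows "strip_hull \<Omega>1 x0 = strip_hull \<Omega>2 x0"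
proof -
  note adm1 = assms(5) and adm2 = assms(6)
  note x = assms(13)
  define f1 where "f1 = f_line F1 x0"
  define f2 where "f2 = f_line F2 x0"
  have i1: "integrable lborel f1" unfolding f1_def by (rule f_line_integrable[OF adm1 x])
  have i2: "integrable lborel f2" unfolding f2_def by (rule f_line_integrable[OF adm2 x])
  define g where "g = (\<lambda>a. f1 a - f2 a)"
  have ig: "integrable lborel g" unfolding g_def using i1 i2 by simp
  define sq where "sq = sqrt (lam + 2 * mu)"
  have sq: "sq > 0" unfolding sq_def using assms(4) by simp
  have ie: "integrable lborel (\<lambda>a. iexp (k * a) * h a)" if "integrable lborel h" for h :: "real \<Rightarrow> complex" and k
  proof -
    have [measurable]: "h \<in> borel_measurable lborel" using that by auto
    show ?thesis by (rule Bochner_Integration.integrable_bound[OF that]) (auto simp: norm_mult)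
  qed
  have ftk: "(CLINT a|lborel. iexp (k * a) * g a) = 0" if k: "\<omega>min / sq < k" "k < \<omega>max / sq" for k
  proof -
    define \<omega> where "\<omega> = k * sq"
    have \<omega>W: "\<omega> \<in> {\<omega>min<..<\<omega>max}" using k sq unfolding \<omega>_def by (auto simp: field_simps)
    have kp: "kp lam mu \<omega> = k" unfolding kp_def \<omega>_def sq_def[symmetric] using sq by simp
    define B where "B = exp (- \<i> * complex_of_real (kp lam mu \<omega> * (x0 \<bullet> z))) * complex_of_real (q0 \<bullet> x0)"
    have B0: "B \<noteq> 0" unfolding B_def using assms(15) by simp
    have pt: "uinf_pt lam mu F z x0 q0 \<omega> \<tau> = uinf_p lam mu F x0 \<omega> + \<tau> * B" for F \<tau>
      unfolding uinf_pt_def B_def by (simp add: mult.assoc)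
    have eqs: "cmod (uinf_p lam mu F1 x0 \<omega> + \<tau> * B) = cmod (uinf_p lam mu F2 x0 \<omega> + \<tau> * B)"
      if "\<tau> \<in> {\<tau>1, \<tau>2, \<tau>3}" for \<tau>
    proof -
      have "cmod (uinf_pt lam mu F1 z x0 q0 \<omega> \<tau>) = cmod (uinf_pt lam mu F2 z x0 q0 \<omega> \<tau>)"
        using assms(18) \<omega>W that by blast
      then show ?thesis by (simp only: pt)
    qed
    have "uinf_p lam mu F1 x0 \<omega> = uinf_p lam mu F2 x0 \<omega>"
      by (rule phase_retrieval[OF B0 assms(9) assms(12) eqs eqs eqs]) auto
    then have "(CLINT a|lborel. iexp (k * a) * f1 a) = (CLINT a|lborel. iexp (k * a) * f2 a)"
      unfolding uinf_p_eq[OF adm1 x] uinf_p_eq[OF adm2 x] kp f1_def f2_def .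
    then have "(CLINT a|lborel. iexp (k * a) * f1 a - iexp (k * a) * f2 a) = 0"
      using ie[OF i1, of k] ie[OF i2, of k] by (simp add: Bochner_Integration.integral_diff)
    then show ?thesis unfolding g_def by (simp add: algebra_simps)
  qed
  obtain R1 where R1: "R1 \<ge> 0" "\<And>w. w \<in> \<Omega>1 \<Longrightarrow> \<bar>w \<bullet> x0\<bar> \<le> R1" using adm_bound[OF adm1 x] by blast
  obtain R2 where R2: "R2 \<ge> 0" "\<And>w. w \<in> \<Omega>2 \<Longrightarrow> \<bar>w \<bullet> x0\<bar> \<le> R2" using adm_bound[OF adm2 x] by blast
  define R where "R = max R1 R2"
  have AB1: "- R \<le> sA \<Omega>1 x0 \<and> sB \<Omega>1 x0 \<le> R"
    using adm_sAB(3)[OF adm1 x, of R] R1 unfolding R_def by force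
  have AB2: "- R \<le> sA \<Omega>2 x0 \<and> sB \<Omega>2 x0 \<le> R"
    using adm_sAB(3)[OF adm2 x, of R] R2 unfolding R_def by force
  have gsupp: "g a = 0" if "R < \<bar>a\<bar>" for a
  proof -
    have o1: "- a < sA \<Omega>1 x0 \<or> sB \<Omega>1 x0 < - a" using AB1 that by (auto simp: abs_if split: if_splits)
    have o2: "- a < sA \<Omega>2 x0 \<or> sB \<Omega>2 x0 < - a" using AB2 that by (auto simp: abs_if split: if_splits)
    show ?thesis unfolding g_def f1_def f2_def
      using f_line_outside[OF adm1 x o1] f_line_outside[OF adm2 x o2] by simp
  qed
  have R0: "0 \<le> R" using R1 R2 unfolding R_def by simp
  have ab: "\<omega>min / sq < \<omega>max / sq" using assms(2) sq by (simp add: divide_strict_right_mono)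
  have allt: "(CLINT a|lborel. iexp (t * a) * g a) = 0" for t
    by (rule fourier_interval[OF ig R0 gsupp ab ftk])
  have "AE a in lborel. g a = 0" by (rule fourier_unique[OF ig allt])
  then have ae: "AE a in lborel. f1 a = f2 a" unfolding g_def by simp
  then have ae': "AE a in lborel. f2 a = f1 a" by (simp add: eq_commute)
  have Z1: "{\<alpha>. line_Pi x0 \<alpha> \<subseteq> strip_hull \<Omega>1 x0 \<and> f1 \<alpha> = 0} \<in> null_sets lebesgue"
    unfolding f1_def by (rule assms(16))
  have Z2: "{\<alpha>. line_Pi x0 \<alpha> \<subseteq> strip_hull \<Omega>2 x0 \<and> f2 \<alpha> = 0} \<in> null_sets lebesgue"
    unfolding f2_def by (rule assms(17))
  have lt1: "sA \<Omega>1 x0 < sB \<Omega>1 x0" by (rule adm_sAB(2)[OF adm1 x])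
  have lt2: "sA \<Omega>2 x0 < sB \<Omega>2 x0" by (rule adm_sAB(2)[OF adm2 x])
  have out1: "f1 \<alpha> = 0" if "- \<alpha> < sA \<Omega>1 x0 \<or> sB \<Omega>1 x0 < - \<alpha>" for \<alpha>
    unfolding f1_def by (rule f_line_outside[OF adm1 x that])
  have out2: "f2 \<alpha> = 0" if "- \<alpha> < sA \<Omega>2 x0 \<or> sB \<Omega>2 x0 < - \<alpha>" for \<alpha>
    unfolding f2_def by (rule f_line_outside[OF adm2 x that])
  have A: "sA \<Omega>1 x0 = sA \<Omega>2 x0"
  proof (rule ccontr)
    assume "sA \<Omega>1 x0 \<noteq> sA \<Omega>2 x0"
    then consider "sA \<Omega>1 x0 < sA \<Omega>2 x0" | "sA \<Omega>2 x0 < sA \<Omega>1 x0" by linarith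
    then show False
    proof cases
      case 1
      show False
        by (rule interval_contra[OF x _ _ ae Z1, where c="sA \<Omega>1 x0" and d="min (sA \<Omega>2 x0) (sB \<Omega>1 x0)"])
           (use 1 lt1 out2 in auto)
    next
      case 2
      show False
        by (rule interval_contra[OF x _ _ ae' Z2, where c="sA \<Omega>2 x0" and d="min (sA \<Omega>1 x0) (sB \<Omega>2 x0)"])
           (use 2 lt2 out1 in auto)
    qed
  qed
  have B: "sB \<Omega>1 x0 = sB \<Omega>2 x0"
  proof (rule ccontr)
    assume "sB \<Omega>1 x0 \<noteq> sB \<Omega>2 x0"
    then consider "sB \<Omega>2 x0 < sB \<Omega>1 x0" | "sB \<Omega>1 x0 < sB \<Omega>2 x0" by linarith
    then show False
    proof cases
      case 1
      show False
        by (rule interval_contra[OF x _ _ ae Z1, where c="max (sB \<Omega>2 x0) (sA \<Omega>1 x0)" and d="sB \<Omega>1 x0"])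
           (use 1 lt1 out2 in auto)
    next
      case 2
      show False
        by (rule interval_contra[OF x _ _ ae' Z2, where c="max (sB \<Omega>1 x0) (sA \<Omega>2 x0)" and d="sB \<Omega>2 x0"])
           (use 2 lt2 out1 in auto)
    qed
  qed
  show ?thesis unfolding strip_hull_sAB A B ..
qed

end
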